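(* The finite separable extension $K_R/K$ has exactly one upper ramification break, namely $\mathcal U_{K_R/K}=\left\{\frac{R}{q-1}\right\}$.
   Context: Let $p$ be a prime and $K$ a complete discrete valuation field of characteristic $p$ with algebraically closed residue field, normalized valuation $v_K$; fix $t\in K$ with $v_K(t)=-1$. Let $q$ be a power of $p$ and $R$ a positive integer prime to $p$, and let $K_R=K(T)$ be the extension defined by $T^q+T^{q-1}=t^R$ (it is separable of degree $q$ over $K$). For a finite separable (not necessarily Galois) extension $M/F$ of complete discrete valuation fields, the set $\mathcal U_{M/F}$ of upper ramification breaks is defined via Deligne's upper numbering filtration on the set of $F$-embeddings of $M$ into a separable closure (Deligne, "Les corps locaux de caractéristique p, limites de corps locaux de caractéristique 0", Appendice); equivalently, it is the set of rationals $x>-1$ at which the Herbrand function $\psi_{M/F}$ is not differentiable. *)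

theory Defs
  imports Complex_Main "HOL-Computational_Algebra.Polynomial" "HOL-Library.Extended_Real"
begin

text \<open>The ambient type 'a (all of it) plays the role of a separable closure of K.
  Valuations take values in ereal, with v 0 = infinity.\<close>

definition is_subfield :: "'a::field set \<Rightarrow> bool" where
  "is_subfield F \<longleftrightarrow> 0 \<in> F \<and> 1 \<in> F \<and> (\<forall>a\<in>F. \<forall>b\<in>F. a + b \<in> F \<and> a * b \<in> F)
     \<and> (\<forall>a\<in>F. - a \<in> F \<and> inverse a \<in> F)"

definition is_valuation :: "('a::field \<Rightarrow> ereal) \<Rightarrow> bool" where
  "is_valuation v \<longleftrightarrow> (\<forall>x. v x = \<infinity> \<longleftrightarrow> x = 0) \<and> (\<forall>x. v x \<noteq> - \<infinity>)
     \<and> (\<forall>x y. v (x * y) = v x + v y) \<and> (\<forall>x y. min (v x) (v y) \<le> v (x + y))"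

definition normalized_discrete_on :: "('a::field \<Rightarrow> ereal) \<Rightarrow> 'a set \<Rightarrow> bool" where
  "normalized_discrete_on v K \<longleftrightarrow> v ` (K - {0}) = range (\<lambda>k::int. ereal (of_int k))"

definition complete_on :: "('a::field \<Rightarrow> ereal) \<Rightarrow> 'a set \<Rightarrow> bool" where
  "complete_on v K \<longleftrightarrow> (\<forall>x::nat \<Rightarrow> 'a. (\<forall>n. x n \<in> K) \<and>
      (\<forall>N::nat. \<exists>M. \<forall>m\<ge>M. \<forall>n\<ge>M. ereal (of_nat N) \<le> v (x m - x n))
      \<longrightarrow> (\<exists>y\<in>K. \<forall>N::nat. \<exists>M. \<forall>n\<ge>M. ereal (of_nat N) \<le> v (x n - y)))"

text \<open>Residue field O_K/m_K algebraically closed: every monic nonconstant polynomial over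
  O_K has a root modulo m_K.\<close>
definition residue_alg_closed :: "('a::field \<Rightarrow> ereal) \<Rightarrow> 'a set \<Rightarrow> bool" where
  "residue_alg_closed v K \<longleftrightarrow> (\<forall>P::'a poly. (\<forall>i. coeff P i \<in> K \<and> 0 \<le> v (coeff P i))
      \<and> 1 \<le> degree P \<and> lead_coeff P = 1 \<longrightarrow> (\<exists>a\<in>K. 0 \<le> v a \<and> 0 < v (poly P a)))"

definition separable_poly :: "'a::field poly \<Rightarrow> bool" where
  "separable_poly P \<longleftrightarrow> P \<noteq> 0 \<and> (\<forall>Q. Q dvd P \<and> Q dvd pderiv P \<longrightarrow> degree Q = 0)"

definition separable_closure :: "'a::field set \<Rightarrow> bool" where
  "separable_closure K \<longleftrightarrow> is_subfield K
     \<and> (\<forall>x::'a. \<exists>P. (\<forall>i. coeff P i \<in> K) \<and> separable_poly P \<and> poly P x = 0)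
     \<and> (\<forall>P::'a poly. 1 \<le> degree P \<and> separable_poly P \<longrightarrow> (\<exists>x. poly P x = 0))"

definition gen_field :: "'a::field set \<Rightarrow> 'a \<Rightarrow> 'a set" where
  "gen_field K T = \<Inter> {F. is_subfield F \<and> K \<subseteq> F \<and> T \<in> F}"

definition embeddings :: "'a::field set \<Rightarrow> 'a set \<Rightarrow> ('a \<Rightarrow> 'a) set" where
  "embeddings K M = {\<sigma>. (\<forall>a\<in>M. \<forall>b\<in>M. \<sigma> (a + b) = \<sigma> a + \<sigma> b \<and> \<sigma> (a * b) = \<sigma> a * \<sigma> b)
      \<and> (\<forall>a\<in>K. \<sigma> a = a) \<and> (\<forall>x. x \<notin> M \<longrightarrow> \<sigma> x = undefined)}"

definition ram_index :: "('a::field \<Rightarrow> ereal) \<Rightarrow> 'a set \<Rightarrow> nat" where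
  "ram_index v M = (THE e::nat. 0 < e \<and>
      v ` (M - {0}) = range (\<lambda>k::int. ereal (of_int k / of_nat e)))"

text \<open>i(sigma) = v_M-normalized inf over the valuation ring O_M of v(sigma a - a).\<close>
definition lower_index :: "('a::field \<Rightarrow> ereal) \<Rightarrow> 'a set \<Rightarrow> ('a \<Rightarrow> 'a) \<Rightarrow> ereal" where
  "lower_index v M \<sigma> = ereal (of_nat (ram_index v M)) * (INF a \<in> {a \<in> M. 0 \<le> v a}. v (\<sigma> a - a))"

definition herbrand_phi :: "('a::field \<Rightarrow> ereal) \<Rightarrow> 'a set \<Rightarrow> 'a set \<Rightarrow> real \<Rightarrow> real" where
  "herbrand_phi v K M u =
     (\<Sum>\<sigma>\<in>embeddings K M. real_of_ereal (min (lower_index v M \<sigma>) (ereal (u + 1))))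
       / of_nat (ram_index v M) - 1"

definition herbrand_psi :: "('a::field \<Rightarrow> ereal) \<Rightarrow> 'a set \<Rightarrow> 'a set \<Rightarrow> real \<Rightarrow> real" where
  "herbrand_psi v K M x = (THE u. -1 \<le> u \<and> herbrand_phi v K M u = x)"

definition upper_breaks :: "('a::field \<Rightarrow> ereal) \<Rightarrow> 'a set \<Rightarrow> 'a set \<Rightarrow> real set" where
  "upper_breaks v K M = {x. -1 < x \<and> \<not> (herbrand_psi v K M differentiable (at x))}"

end

theory Submission
  imports Defs
begin


section \<open>Generic valuation facts\<close>

context
  fixes v :: "'a::field \<Rightarrow> ereal"
  assumes val: "is_valuation v"
begin

lemma v0[simp]: "v 0 = \<infinity>" using val unfolding is_valuation_def by auto
lemma v_inf_iff: "v x = \<infinity> \<longleftrightarrow> x = 0" using val unfolding is_valuation_def by auto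
lemma v_not_minf: "v x \<noteq> -\<infinity>" using val unfolding is_valuation_def by auto
lemma v_mult: "v (x * y) = v x + v y" using val unfolding is_valuation_def by auto
lemma v_add: "min (v x) (v y) \<le> v (x + y)" using val unfolding is_valuation_def by auto

lemma v_fin: "x \<noteq> 0 \<Longrightarrow> v x = ereal (real_of_ereal (v x))"
  using v_inf_iff[of x] v_not_minf[of x] by (cases "v x") auto

lemma w_mult: "x \<noteq> 0 \<Longrightarrow> y \<noteq> 0 \<Longrightarrow>
   real_of_ereal (v (x * y)) = real_of_ereal (v x) + real_of_ereal (v y)"
  using v_mult[of x y] v_fin[of x] v_fin[of y] by (metis plus_ereal.simps(1) real_of_ereal.simps(1))

lemma v_one[simp]: "v 1 = 0"
proof -
  have "real_of_ereal (v 1) = 0" using w_mult[of 1 1] by simp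
  thus ?thesis using v_fin[of 1] by (simp add: zero_ereal_def)
qed

lemma v_m1[simp]: "v (-1) = 0"
proof -
  have "real_of_ereal (v (-1)) + real_of_ereal (v (-1)) = 0" using w_mult[of "-1" "-1"] by simp
  hence "real_of_ereal (v (-1)) = 0" by simp
  thus ?thesis using v_fin[of "-1"] by (simp add: zero_ereal_def)
qed

lemma v_uminus[simp]: "v (- x) = v x"
  using v_mult[of "-1" x] by simp

lemma v_inverse: "x \<noteq> 0 \<Longrightarrow> v (inverse x) = - v x"
proof -
  assume x: "x \<noteq> 0"
  have "real_of_ereal (v x) + real_of_ereal (v (inverse x)) = 0"
    using w_mult[of x "inverse x"] x by simp
  thus ?thesis using v_fin[of x] v_fin[of "inverse x"] x
    by (metis add.inverse_unique inverse_nonzero_iff_nonzero uminus_ereal.simps(1))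
qed

lemma v_power: "x \<noteq> 0 \<Longrightarrow> v (x ^ n) = ereal (real n * real_of_ereal (v x))"
proof (induction n)
  case 0 then show ?case by (simp add: zero_ereal_def)
next
  case (Suc n)
  have "v (x ^ Suc n) = v x + v (x ^ n)" by (simp add: v_mult)
  also have "\<dots> = ereal (real_of_ereal (v x)) + ereal (real n * real_of_ereal (v x))"
    using Suc v_fin[of x] by simp
  finally show ?case by (simp add: algebra_simps)
qed

lemma v_diff: "min (v x) (v y) \<le> v (x - y)"
  using v_add[of x "-y"] by simp

lemma v_strict: "v x < v y \<Longrightarrow> v (x + y) = v x"
proof -
  assume lt: "v x < v y"
  have a: "min (v x) (v y) \<le> v (x + y)" by (rule v_add)
  have "min (v (x + y)) (v y) \<le> v x" using v_diff[of "x+y" y] by simp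
  thus ?thesis using a lt by (auto simp: min_def split: if_splits)
qed

lemma v_strict': "v x < v y \<Longrightarrow> v (y + x) = v x"
  using v_strict by (simp add: add.commute)

lemma v_sum_ge: "finite I \<Longrightarrow> (\<forall>i\<in>I. c \<le> v (f i)) \<Longrightarrow> c \<le> v (sum f I)"
proof (induction I rule: finite_induct)
  case empty then show ?case by simp
next
  case (insert x F)
  then have "c \<le> min (v (f x)) (v (sum f F))" by auto
  also have "\<dots> \<le> v (f x + sum f F)" by (rule v_add)
  finally show ?case using insert by simp
qed

lemma v_sum_eq: "finite I \<Longrightarrow> j \<in> I \<Longrightarrow> (\<forall>i\<in>I-{j}. v (f j) < v (f i)) \<Longrightarrow> v (sum f I) = v (f j)"
proof -
  assume fin: "finite I" and j: "j \<in> I" and lt: "\<forall>i\<in>I-{j}. v (f j) < v (f i)"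
  have split: "sum f I = f j + sum f (I - {j})" using fin j by (simp add: sum.remove)
  show ?thesis
  proof (cases "I - {j} = {}")
    case True
    then have "sum f (I - {j}) = 0" by (metis sum.empty)
    then show ?thesis using split by simp
  next
    case False
    define m where "m = Min ((\<lambda>i. v (f i)) ` (I - {j}))"
    have "m \<in> (\<lambda>i. v (f i)) ` (I - {j})" unfolding m_def using False fin by (intro Min_in) auto
    hence "v (f j) < m" using lt by auto
    also have "m \<le> v (sum f (I - {j}))"
      using fin by (intro v_sum_ge) (auto simp: m_def)
    finally show ?thesis using split v_strict by simp
  qed
qed

lemma v_of_nat_ge: "0 \<le> v (of_nat n)"
proof (induction n)
  case 0 then show ?case by simp
next
  case (Suc n)
  have "min (v 1) (v (of_nat n)) \<le> v (1 + of_nat n)" by (rule v_add)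
  thus ?case using Suc by simp
qed

end


locale KR =
  fixes v :: "'a::field \<Rightarrow> ereal" and K :: "'a set" and p q R :: nat and t T :: 'a
  assumes prime: "prime p" and charp: "of_nat p = (0::'a)"
    and sc: "separable_closure K" and val: "is_valuation v"
    and nd: "normalized_discrete_on v K"
    and tK: "t \<in> K" and vt: "v t = -1"
    and qpow: "\<exists>k\<ge>1. q = p ^ k" and Rpos: "0 < R" and pR: "\<not> p dvd R"
    and Teq: "T ^ q + T ^ (q - 1) = t ^ R"
begin

definition Z where "Z = {x. x ^ q + x ^ (q - 1) = t ^ R}"
definition wT :: real where "wT = - real R / real q"
lemma v1[simp]: "v 1 = 0" using v_one[OF val] .
lemma vz[simp]: "v 0 = \<infinity>" using v0[OF val] .
lemma vneg[simp]: "v (- x) = v x" using v_uminus[OF val] .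

abbreviation w where "w x \<equiv> real_of_ereal (v x)"

lemma q2: "2 \<le> q"
proof -
  obtain k where "k \<ge> 1" "q = p ^ k" using qpow by auto
  moreover have "2 \<le> p" using prime prime_ge_2_nat by blast
  ultimately show ?thesis
    using power_increasing[of 1 k p] by auto
qed

lemma p_dvd_q: "p dvd q"
proof -
  obtain k where "k \<ge> 1" "q = p ^ k" using qpow by auto
  thus ?thesis by (simp add: dvd_power)
qed

lemma q_zero: "(of_nat q :: 'a) = 0"
proof -
  obtain m where "q = p * m" using p_dvd_q by auto
  thus ?thesis using charp by simp
qed

lemma cop: "coprime q R"
proof -
  obtain k where "q = p ^ k" using qpow by auto
  moreover have "coprime p R" using prime pR by (simp add: prime_imp_coprime)
  ultimately show ?thesis by simp
qed

lemma Ksub: "is_subfield K" using sc unfolding separable_closure_def by auto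
lemma K0[simp]: "0 \<in> K" using Ksub unfolding is_subfield_def by auto
lemma K1[simp]: "1 \<in> K" using Ksub unfolding is_subfield_def by auto
lemma Kadd[simp]: "a \<in> K \<Longrightarrow> b \<in> K \<Longrightarrow> a + b \<in> K" using Ksub unfolding is_subfield_def by auto
lemma Kmult[simp]: "a \<in> K \<Longrightarrow> b \<in> K \<Longrightarrow> a * b \<in> K" using Ksub unfolding is_subfield_def by auto
lemma Kuminus[simp]: "a \<in> K \<Longrightarrow> - a \<in> K" using Ksub unfolding is_subfield_def by auto
lemma Kinv[simp]: "a \<in> K \<Longrightarrow> inverse a \<in> K" using Ksub unfolding is_subfield_def by auto
lemma Kdiff[simp]: "a \<in> K \<Longrightarrow> b \<in> K \<Longrightarrow> a - b \<in> K" using Kadd[of a "-b"] by simp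
lemma Kpow[simp]: "a \<in> K \<Longrightarrow> a ^ n \<in> K" by (induction n) auto
lemma Ksum[simp]: "(\<And>i. i \<in> I \<Longrightarrow> f i \<in> K) \<Longrightarrow> sum f I \<in> K"
  by (induction I rule: infinite_finite_induct) auto
lemma Knat[simp]: "of_nat n \<in> K" by (induction n) auto

lemma vK: "c \<in> K \<Longrightarrow> c \<noteq> 0 \<Longrightarrow> \<exists>z::int. v c = ereal (of_int z)"
  using nd unfolding normalized_discrete_on_def by auto

lemma t_nz: "t \<noteq> 0"
proof
  assume "t = 0"
  then have "v t = \<infinity>" using v0[OF val] by simp
  thus False using vt by (simp add: one_ereal_def)
qed

lemma v_tR: "v (t ^ R) = ereal (- real R)"
  using v_power[OF val t_nz, of R] vt by simp

lemma root_v: assumes "x \<in> Z" shows "x \<noteq> 0" and "v x = ereal wT"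
proof -
  have eq: "x ^ q + x ^ (q - 1) = t ^ R" using assms unfolding Z_def by auto
  show x0: "x \<noteq> 0"
  proof
    assume "x = 0"
    then have "t ^ R = (0::'a) ^ q + 0 ^ (q - 1)" using eq by simp
    also have "\<dots> = 0" using q2 by (simp add: power_0_left)
    finally have "t ^ R = 0" .
    thus False using t_nz by simp
  qed
  have fac: "x ^ q + x ^ (q - 1) = x ^ (q - 1) * (x + 1)"
  proof -
    obtain m where m: "q = Suc m" using q2 by (cases q) auto
    show ?thesis unfolding m by (simp add: algebra_simps)
  qed
  define a where "a = w x"
  have vx: "v x = ereal a" using v_fin[OF val x0] a_def by simp
  have vxq: "v (x ^ (q - 1)) = ereal (real (q - 1) * a)" using v_power[OF val x0] a_def by simp
  have "a < 0"
  proof (rule ccontr)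
    assume "\<not> a < 0"
    hence a0: "0 \<le> a" by simp
    have "min (v x) (v 1) \<le> v (x + 1)" by (rule v_add[OF val])
    hence "0 \<le> v (x + 1)" using vx a0 by (auto simp: min_def zero_ereal_def split: if_splits)
    moreover have "0 \<le> v (x ^ (q - 1))" using vxq a0 by simp
    ultimately have "0 \<le> v (t ^ R)" using eq fac v_mult[OF val] by (metis add_nonneg_nonneg)
    thus False using v_tR Rpos by simp
  qed
  hence "v x < v 1" using vx by simp
  hence "v (x + 1) = v x" by (rule v_strict[OF val])
  hence "v (t ^ R) = ereal (real (q - 1) * a) + ereal a"
    using eq fac v_mult[OF val] vxq vx by metis
  hence "- real R = real (q - 1) * a + a" using v_tR by simp
  hence "- real R = real q * a" using q2 by (simp add: of_nat_diff algebra_simps)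
  hence "a = wT" unfolding wT_def using q2 by (simp add: field_simps)
  thus "v x = ereal wT" using vx by simp
qed

lemma T_Z: "T \<in> Z" using Teq unfolding Z_def by simp

end


context KR begin

lemma v_mult_ge: "ereal c \<le> v a \<Longrightarrow> ereal d \<le> v b \<Longrightarrow> ereal (c + d) \<le> v (a * b)"
  using v_mult[OF val, of a b] add_mono[of "ereal c" "v a" "ereal d" "v b"] by simp

lemma v_pow_root: "x \<in> Z \<Longrightarrow> v (x ^ n) = ereal (real n * wT)"
  using v_power[OF val root_v(1), of x n] root_v(2)[of x] by simp

lemma of_nat_p_mult: "p dvd m \<Longrightarrow> (of_nat m :: 'a) = 0"
  using charp by (auto elim!: dvdE)

lemma frob_p: "(x + y :: 'a) ^ p = x ^ p + y ^ p"
proof -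
  have p0: "p \<noteq> 0" using prime by auto
  define f where "f k = of_nat (p choose k) * x ^ k * y ^ (p - k)" for k
  have "(x + y) ^ p = (\<Sum>k\<le>p. f k)" unfolding f_def by (rule binomial_ring)
  also have "\<dots> = (\<Sum>k\<in>{0,p}. f k)"
  proof (rule sum.mono_neutral_right)
    show "\<forall>i\<in>{..p} - {0, p}. f i = 0"
    proof
      fix i assume i: "i \<in> {..p} - {0, p}"
      hence "p dvd (p choose i)" using prime by (intro dvd_choose_prime) auto
      thus "f i = 0" unfolding f_def using of_nat_p_mult by simp
    qed
  qed auto
  also have "\<dots> = x ^ p + y ^ p" using p0 by (simp add: f_def)
  finally show ?thesis .
qed

lemma frob_pk: "(x + y :: 'a) ^ (p ^ k) = x ^ (p ^ k) + y ^ (p ^ k)"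
proof (induction k)
  case 0 then show ?case by simp
next
  case (Suc k)
  have "(x + y) ^ (p ^ Suc k) = ((x + y) ^ (p ^ k)) ^ p" by (simp add: power_mult[symmetric] mult.commute)
  also have "\<dots> = (x ^ (p ^ k)) ^ p + (y ^ (p ^ k)) ^ p" using Suc frob_p by simp
  also have "\<dots> = x ^ (p ^ Suc k) + y ^ (p ^ Suc k)" by (simp add: power_mult[symmetric] mult.commute)
  finally show ?case .
qed

lemma frob: "(x - y :: 'a) ^ q = x ^ q - y ^ q"
proof -
  obtain k where "q = p ^ k" using qpow by auto
  then have "((x - y) + y) ^ q = (x - y) ^ q + y ^ q" using frob_pk[of "x - y" y k] by simp
  thus ?thesis by (simp add: algebra_simps)
qed

definition rho :: real where "rho = real R / (real q * (real q - 1))"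

lemma rho_pos: "0 < rho" unfolding rho_def using q2 Rpos by simp

lemma wT_neg: "wT < 0" unfolding wT_def using q2 Rpos by simp

lemma v_plus1: "x \<in> Z \<Longrightarrow> v (x + 1) = ereal wT"
proof -
  assume x: "x \<in> Z"
  have "v x < v 1" using root_v(2)[OF x] wT_neg by simp
  thus ?thesis using v_strict[OF val] root_v(2)[OF x] by simp
qed

lemma delta_v: assumes r: "r \<in> Z" and rT: "r \<noteq> T" shows "v (r - T) = ereal (wT + rho)"
proof -
  define d where "d = r - T"
  have d0: "d \<noteq> 0" using rT d_def by simp
  define a where "a = r ^ (q - 1)"
  define b where "b = T ^ (q - 1)"
  obtain m where m: "q = Suc m" using q2 by (cases q) auto
  have h1: "r ^ q + r ^ (q-1) = T ^ q + T ^ (q - 1)" using r T_Z unfolding Z_def by simp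
  have hr: "r * a + a = T * b + b" using h1 unfolding a_def b_def m by (simp add: algebra_simps)
  have "d ^ q = r ^ q - T ^ q" unfolding d_def by (rule frob)
  also have "\<dots> = r * a - T * b" unfolding a_def b_def m by simp
  finally have dq: "d ^ q = r * a - T * b" .
  have "(r * a - T * b) * (r + 1) - (r - T) * b = r * ((r * a + a) - (T * b + b))"
    by (simp add: algebra_simps)
  also have "\<dots> = 0" using hr by simp
  finally have "d ^ q * (r + 1) = d * b" using dq d_def by simp
  hence "d * (d ^ (q - 1) * (r + 1)) = d * b" unfolding m by (simp add: algebra_simps)
  hence key: "d ^ (q - 1) * (r + 1) = b" using d0 by simp
  have vd: "v d = ereal (w d)" using v_fin[OF val d0] .
  have "v (d ^ (q - 1) * (r + 1)) = ereal (real (q - 1) * w d) + ereal wT"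
    using v_mult[OF val] v_power[OF val d0] v_plus1[OF r] by simp
  moreover have "v b = ereal (real (q - 1) * wT)" unfolding b_def using v_pow_root[OF T_Z] by simp
  ultimately have "real (q - 1) * w d + wT = real (q - 1) * wT" using key by simp
  hence "w d = wT + rho" unfolding rho_def wT_def using q2
    by (simp add: of_nat_diff field_simps)
  thus ?thesis using vd d_def by simp
qed

lemma diffpow_v: assumes r: "r \<in> Z" and j: "1 \<le> j"
  shows "ereal (real j * wT + rho) \<le> v (r ^ j - T ^ j)"
proof (cases "r = T")
  case True then show ?thesis by simp
next
  case False
  have eq: "r ^ j - T ^ j = (r - T) * (\<Sum>i<j. T ^ (j - Suc i) * r ^ i)" by (rule power_diff_sumr2)
  have "ereal (real (j - 1) * wT) \<le> v (\<Sum>i<j. T ^ (j - Suc i) * r ^ i)"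
  proof (rule v_sum_ge[OF val], simp, intro ballI)
    fix i assume i: "i \<in> {..<j}"
    have "v (T ^ (j - Suc i) * r ^ i) = ereal (real (j - Suc i) * wT) + ereal (real i * wT)"
      using v_mult[OF val] v_pow_root[OF T_Z] v_pow_root[OF r] by simp
    also have "\<dots> = ereal (real (j - 1) * wT)" using i by (simp add: of_nat_diff algebra_simps)
    finally show "ereal (real (j - 1) * wT) \<le> v (T ^ (j - Suc i) * r ^ i)" by simp
  qed
  hence "ereal ((wT + rho) + real (j - 1) * wT) \<le> v (r ^ j - T ^ j)"
    unfolding eq using delta_v[OF r False] by (intro v_mult_ge) auto
  thus ?thesis using j by (simp add: of_nat_diff algebra_simps)
qed

end


context KR begin

definition Kp :: "'a poly \<Rightarrow> bool" where "Kp P \<longleftrightarrow> (\<forall>i. coeff P i \<in> K)"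
definition Kf :: "(nat \<Rightarrow> 'a) \<Rightarrow> bool" where "Kf c \<longleftrightarrow> (\<forall>i. c i \<in> K)"
definition E :: "'a \<Rightarrow> (nat \<Rightarrow> 'a) \<Rightarrow> 'a" where "E x c = (\<Sum>i<q. c i * x ^ i)"
definition sh :: "(nat \<Rightarrow> 'a) \<Rightarrow> nat \<Rightarrow> 'a" where
  "sh c i = (if i = 0 then c (q - 1) * t ^ R else c (i - 1)) - (if i = q - 1 then c (q - 1) else 0)"

lemma Kp_0[simp]: "Kp 0" by (simp add: Kp_def)
lemma Kp_pCons[simp]: "Kp (pCons a P) \<longleftrightarrow> a \<in> K \<and> Kp P"
  unfolding Kp_def by (metis coeff_pCons_0 coeff_pCons_Suc not0_implies_Suc)
lemma Kp_1[simp]: "Kp 1" by (simp add: one_pCons)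
lemma Kp_const[simp]: "c \<in> K \<Longrightarrow> Kp [:c:]" by simp
lemma Kp_add[simp]: "Kp P \<Longrightarrow> Kp Q \<Longrightarrow> Kp (P + Q)" by (simp add: Kp_def)
lemma Kp_uminus[simp]: "Kp P \<Longrightarrow> Kp (- P)" by (simp add: Kp_def)
lemma Kp_mult[simp]: "Kp P \<Longrightarrow> Kp Q \<Longrightarrow> Kp (P * Q)" by (simp add: Kp_def coeff_mult)
lemma Kp_monom[simp]: "c \<in> K \<Longrightarrow> Kp (monom c n)" by (simp add: Kp_def coeff_monom)
lemma Kp_X[simp]: "Kp [:0, 1:]" by simp

lemma Kf_sh: "Kf c \<Longrightarrow> Kf (sh c)" using tK by (simp add: Kf_def sh_def)

lemma E_add: "E x (\<lambda>i. c i + d i) = E x c + E x d"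
  by (simp add: E_def sum.distrib algebra_simps)

lemma E_delta: "E x (\<lambda>i. if i = 0 then a else 0) = a"
proof -
  have "E x (\<lambda>i. if i = 0 then a else 0) = (\<Sum>i<q. if i = 0 then a * x ^ i else 0)"
    unfolding E_def by (intro sum.cong) auto
  also have "\<dots> = a" using q2 by (simp add: sum.delta)
  finally show ?thesis .
qed

lemma E_sh: assumes x: "x \<in> Z" shows "x * E x c = E x (sh c)"
proof -
  obtain m where m: "q = Suc m" and m1: "1 \<le> m" using q2 by (cases q) auto
  have xz: "x ^ q + x ^ (q - 1) = t ^ R" using x unfolding Z_def by simp
  have xm: "x ^ Suc m = t ^ R - x ^ m" using xz unfolding m by (simp add: algebra_simps)
  have "x * E x c = (\<Sum>i<Suc m. c i * x ^ Suc i)" unfolding E_def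
    by (simp add: m sum_distrib_left algebra_simps)
  also have "\<dots> = (\<Sum>i<m. c i * x ^ Suc i) + c m * (t ^ R - x ^ m)" using xm by simp
  finally have l: "x * E x c = (\<Sum>i<m. c i * x ^ Suc i) + c m * (t ^ R - x ^ m)" .
  have "E x (sh c) = sh c 0 * x ^ 0 + (\<Sum>i<m. sh c (Suc i) * x ^ Suc i)"
    unfolding E_def unfolding m by (rule sum.lessThan_Suc_shift)
  also have "sh c 0 * x ^ 0 = sh c 0" by simp
  also have "sh c 0 = c m * t ^ R" using m1 unfolding sh_def by (simp add: m)
  also have "(\<Sum>i<m. sh c (Suc i) * x ^ Suc i)
      = (\<Sum>i<m. c i * x ^ Suc i) - (\<Sum>i<m. if i = m - 1 then c m * x ^ Suc i else 0)"
  proof -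
    have "(\<Sum>i<m. sh c (Suc i) * x ^ Suc i)
      = (\<Sum>i<m. c i * x ^ Suc i - (if i = m - 1 then c m * x ^ Suc i else 0))"
    proof (intro sum.cong refl)
      fix i assume "i \<in> {..<m}"
      have "sh c (Suc i) = c i - (if i = m - 1 then c m else 0)"
        unfolding sh_def using m m1 by auto
      thus "sh c (Suc i) * x ^ Suc i = c i * x ^ Suc i - (if i = m - 1 then c m * x ^ Suc i else 0)"
        by (cases "i = m - 1") (simp_all only: if_True if_False left_diff_distrib diff_zero refl mult_zero_left)
    qed
    thus ?thesis by (simp add: sum_subtractf)
  qed
  also have "(\<Sum>i<m. if i = m - 1 then c m * x ^ Suc i else 0) = c m * x ^ m"
    using m1 by (simp add: sum.delta)
  finally have r: "E x (sh c) = c m * t ^ R + ((\<Sum>i<m. c i * x ^ Suc i) - c m * x ^ m)" .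
  show ?thesis unfolding r l by (simp add: algebra_simps)
qed

lemma reduce: "Kp P \<Longrightarrow> \<exists>c. Kf c \<and> (\<forall>x\<in>Z. poly P x = E x c)"
proof (induction P rule: pCons_induct)
  case 0
  show ?case by (rule exI[of _ "\<lambda>i. 0"]) (simp add: Kf_def E_def)
next
  case (pCons a P)
  then obtain c where c: "Kf c" "\<forall>x\<in>Z. poly P x = E x c" by auto
  have aK: "a \<in> K" using pCons by simp
  define d where "d i = sh c i + (if i = 0 then a else 0)" for i
  have "Kf d" using Kf_sh[OF c(1)] aK unfolding d_def Kf_def by simp
  moreover have "\<forall>x\<in>Z. poly (pCons a P) x = E x d"
  proof
    fix x assume x: "x \<in> Z"
    have "poly (pCons a P) x = a + x * E x c" using c x by simp
    also have "\<dots> = E x d" unfolding d_def E_add E_delta E_sh[OF x] by simp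
    finally show "poly (pCons a P) x = E x d" .
  qed
  ultimately show ?case by blast
qed

end


context KR begin

lemma T_nz: "T \<noteq> 0" using root_v(1)[OF T_Z] .

lemma term_v: assumes "c \<in> K" "c \<noteq> 0" shows "\<exists>z::int. v (c * T ^ i) = ereal (of_int z + real i * wT)"
proof -
  obtain z :: int where z: "v c = ereal (of_int z)" using vK assms by blast
  have "v (c * T ^ i) = ereal (of_int z) + ereal (real i * wT)"
    using v_mult[OF val] z v_pow_root[OF T_Z] by simp
  thus ?thesis by auto
qed

lemma int_eq_aux: assumes "of_int z1 + real i * wT = of_int z2 + real j * wT"
  shows "(z1 - z2) * int q = (int i - int j) * int R"
proof -
  have "real q > 0" using q2 by simp
  have wq: "wT * real q = - real R" unfolding wT_def using q2 by simp
  from assms have "(of_int z1 + real i * wT) * real q = (of_int z2 + real j * wT) * real q" by simp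
  hence "of_int z1 * real q + real i * (wT * real q) = of_int z2 * real q + real j * (wT * real q)"
    by (simp add: algebra_simps)
  hence "of_int z1 * real q - real i * real R = of_int z2 * real q - real j * real R"
    unfolding wq by simp
  hence "real_of_int ((z1 - z2) * int q) = real_of_int ((int i - int j) * int R)"
    by (simp add: algebra_simps)
  thus ?thesis by (simp only: of_int_eq_iff)
qed

lemma q_dvd_imp: assumes "int q dvd (int i - int j) * int R" "i < q" "j < q" shows "i = j"
proof -
  have "coprime (int q) (int R)" using cop by simp
  hence d: "int q dvd (int i - int j)" using assms(1) by (simp add: coprime_dvd_mult_left_iff)
  show ?thesis
  proof (rule ccontr)
    assume "i \<noteq> j"
    hence "int i - int j \<noteq> 0" by simp
    hence "\<bar>int q\<bar> \<le> \<bar>int i - int j\<bar>" using d by (rule dvd_imp_le_int)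
    thus False using assms(2,3) by linarith
  qed
qed

lemma term_distinct: assumes "c \<in> K" "c \<noteq> 0" "d \<in> K" "d \<noteq> 0" "i < q" "j < q"
  and eq: "v (c * T ^ i) = v (d * T ^ j)" shows "i = j"
proof -
  obtain z1 :: int where z1: "v (c * T ^ i) = ereal (of_int z1 + real i * wT)" using term_v[OF assms(1,2)] by blast
  obtain z2 :: int where z2: "v (d * T ^ j) = ereal (of_int z2 + real j * wT)" using term_v[OF assms(3,4)] by blast
  have e2: "(z1 - z2) * int q = (int i - int j) * int R" using eq z1 z2 by (intro int_eq_aux) simp
  have "int q dvd (z1 - z2) * int q" by simp
  hence "int q dvd (int i - int j) * int R" by (simp only: e2)
  thus ?thesis using q_dvd_imp[OF _ assms(5,6)] by blast
qed

lemma term_nonint: assumes "c \<in> K" "c \<noteq> 0" "1 \<le> i" "i < q" and ge: "0 \<le> v (c * T ^ i)"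
  shows "ereal (1 / real q) \<le> v (c * T ^ i)"
proof -
  obtain z :: int where z: "v (c * T ^ i) = ereal (of_int z + real i * wT)" using term_v[OF assms(1,2)] by blast
  have wq: "wT * real q = - real R" unfolding wT_def using q2 by simp
  have e: "(of_int z + real i * wT) * real q = real_of_int (z * int q - int i * int R)"
    using wq by (simp add: algebra_simps)
  have "0 \<le> of_int z + real i * wT" using ge z by simp
  hence "0 \<le> (of_int z + real i * wT) * real q" by simp
  hence "0 \<le> real_of_int (z * int q - int i * int R)" by (simp only: e)
  hence n0: "0 \<le> z * int q - int i * int R" by (simp only: of_int_0_le_iff)
  have "z * int q - int i * int R \<noteq> 0"
  proof
    assume "z * int q - int i * int R = 0"
    hence "int i * int R = z * int q" by simp
    hence "int q dvd (int i - int 0) * int R" by simp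
    hence "i = 0" using q_dvd_imp[of i 0] assms(4) q2 by simp
    thus False using assms(3) by simp
  qed
  hence "1 \<le> z * int q - int i * int R" using n0 by simp
  hence "1 \<le> real_of_int (z * int q - int i * int R)" by (simp only: of_int_1_le_iff)
  hence "1 \<le> (of_int z + real i * wT) * real q" by (simp only: e)
  hence "1 / real q \<le> of_int z + real i * wT" using q2 by (simp add: field_simps)
  thus ?thesis using z by simp
qed

lemma min_formula: assumes Kc: "Kf c" and ex: "\<exists>i<q. c i \<noteq> 0"
  shows "\<exists>j<q. c j \<noteq> 0 \<and> v (E T c) = v (c j * T ^ j) \<and> (\<forall>i<q. v (c j * T ^ j) \<le> v (c i * T ^ i))"
proof -
  define J where "J = {i. i < q \<and> c i \<noteq> 0}"
  define g where "g i = v (c i * T ^ i)" for i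
  have finJ: "finite J" unfolding J_def by simp
  have neJ: "J \<noteq> {}" using ex unfolding J_def by auto
  define m where "m = Min (g ` J)"
  have "m \<in> g ` J" unfolding m_def using finJ neJ by (intro Min_in) auto
  then obtain j where jJ: "j \<in> J" and gj: "g j = m" by auto
  have le: "\<forall>i<q. g j \<le> g i"
  proof (intro allI impI)
    fix i assume i: "i < q"
    show "g j \<le> g i"
    proof (cases "i \<in> J")
      case True then show ?thesis unfolding gj m_def using finJ by simp
    next
      case False then have "c i = 0" using i unfolding J_def by auto
      then show ?thesis unfolding g_def by simp
    qed
  qed
  have cj: "c j \<noteq> 0" "j < q" "c j \<in> K" using jJ Kc unfolding J_def Kf_def by auto
  have gjfin: "g j \<noteq> \<infinity>" unfolding g_def using cj T_nz v_inf_iff[OF val] by simp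
  have "v (E T c) = v (c j * T ^ j)"
    unfolding E_def
  proof (rule v_sum_eq[OF val], simp, simp add: cj, intro ballI)
    fix i assume i: "i \<in> {..<q} - {j}"
    show "v (c j * T ^ j) < v (c i * T ^ i)"
    proof (cases "c i = 0")
      case True then show ?thesis using gjfin unfolding g_def by (simp add: less_top[symmetric])
    next
      case False
      have "g j \<le> g i" using le i by auto
      moreover have "g j \<noteq> g i"
      proof
        assume "g j = g i"
        hence "j = i" using term_distinct[of "c j" "c i" j i] cj False i Kc unfolding g_def Kf_def by simp
        thus False using i by simp
      qed
      ultimately show ?thesis unfolding g_def by simp
    qed
  qed
  hence "c j \<noteq> 0 \<and> v (E T c) = v (c j * T ^ j) \<and> (\<forall>i<q. v (c j * T ^ j) \<le> v (c i * T ^ i))"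
    using cj le unfolding g_def by simp
  with cj(2) show ?thesis by (intro exI[of _ j]) simp
qed

lemma E_zero: assumes "Kf c" "E T c = 0" shows "\<forall>i<q. c i = 0"
proof (rule ccontr)
  assume "\<not> (\<forall>i<q. c i = 0)"
  hence "\<exists>i<q. c i \<noteq> 0" by simp
  from min_formula[OF assms(1) this] obtain j where j: "j < q" "c j \<noteq> 0" "v (E T c) = v (c j * T ^ j)"
    by blast
  have "c j * T ^ j \<noteq> 0" using j(2) T_nz by simp
  hence "v (c j * T ^ j) \<noteq> \<infinity>" using v_inf_iff[OF val] by simp
  thus False using assms(2) j(3) by simp
qed

lemma E_diff: "E x (\<lambda>i. c i - d i) = E x c - E x d"
  unfolding E_def by (simp add: sum_subtractf[symmetric] left_diff_distrib)

lemma E_unique: assumes "Kf c" "Kf d" "E T c = E T d" shows "\<forall>i<q. c i = d i"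
proof -
  have "Kf (\<lambda>i. c i - d i)" using assms unfolding Kf_def by simp
  moreover have "E T (\<lambda>i. c i - d i) = 0" using assms(3) by (simp add: E_diff)
  ultimately have "\<forall>i<q. c i - d i = 0" by (rule E_zero)
  thus ?thesis by simp
qed

lemma E_cong: "\<forall>i<q. c i = d i \<Longrightarrow> E x c = E x d"
  unfolding E_def by (intro sum.cong) auto

end


context KR begin

definition S where "S = {y. \<exists>P. Kp P \<and> y = poly P T}"

lemma S_K: "c \<in> K \<Longrightarrow> c \<in> S" unfolding S_def by (intro CollectI exI[of _ "[:c:]"]) simp
lemma S_T: "T \<in> S" unfolding S_def by (intro CollectI exI[of _ "[:0,1:]"]) simp
lemma S_add: assumes "a \<in> S" "b \<in> S" shows "a + b \<in> S"
proof -
  obtain P Q where "Kp P" "a = poly P T" "Kp Q" "b = poly Q T" using assms unfolding S_def by auto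
  thus ?thesis unfolding S_def by (intro CollectI exI[of _ "P + Q"]) simp
qed
lemma S_mult: assumes "a \<in> S" "b \<in> S" shows "a * b \<in> S"
proof -
  obtain P Q where "Kp P" "a = poly P T" "Kp Q" "b = poly Q T" using assms unfolding S_def by auto
  thus ?thesis unfolding S_def by (intro CollectI exI[of _ "P * Q"]) simp
qed
lemma S_uminus: assumes "a \<in> S" shows "- a \<in> S"
proof -
  obtain P where "Kp P" "a = poly P T" using assms unfolding S_def by auto
  thus ?thesis unfolding S_def by (intro CollectI exI[of _ "- P"]) simp
qed
lemma S_0: "0 \<in> S" using S_K by simp
lemma S_1: "1 \<in> S" using S_K by simp
lemma S_pow: "a \<in> S \<Longrightarrow> a ^ n \<in> S" by (induction n) (auto intro: S_1 S_mult)
lemma S_sum: "(\<And>i. i \<in> I \<Longrightarrow> f i \<in> S) \<Longrightarrow> sum f I \<in> S"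
  by (induction I rule: infinite_finite_induct) (auto intro: S_0 S_add)
lemma S_E: "Kf c \<Longrightarrow> E T c \<in> S"
  unfolding E_def Kf_def by (intro S_sum S_mult S_K S_pow S_T) auto

lemma S_poly: "Kp P \<Longrightarrow> a \<in> S \<Longrightarrow> poly P a \<in> S"
proof (induction P rule: pCons_induct)
  case 0 then show ?case by (simp add: S_0)
next
  case (pCons c P)
  hence "c \<in> K" "poly P a \<in> S" by auto
  hence "c + a * poly P a \<in> S" using pCons.prems(2) by (intro S_add[OF S_K] S_mult)
  thus ?case by simp
qed

lemma inv_aux: "Kp P \<Longrightarrow> P \<noteq> 0 \<Longrightarrow> poly P a = 0 \<Longrightarrow> a \<noteq> 0 \<Longrightarrow> a \<in> S \<Longrightarrow> inverse a \<in> S"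
proof (induction P rule: pCons_induct)
  case 0 then show ?case by simp
next
  case (pCons c P)
  have cK: "c \<in> K" and KP: "Kp P" using pCons.prems by auto
  have ev: "c + a * poly P a = 0" using pCons.prems by simp
  show ?case
  proof (cases "c = 0")
    case True
    then have "poly P a = 0" using ev pCons.prems by simp
    moreover have "P \<noteq> 0" using True pCons.prems by auto
    ultimately show ?thesis using pCons.IH KP pCons.prems by blast
  next
    case False
    have ap: "a * poly P a = - c" using ev by (simp add: eq_neg_iff_add_eq_0 add.commute)
    have "a * (- poly P a * inverse c) = - (a * poly P a) * inverse c" by simp
    also have "\<dots> = 1" using ap False by simp
    finally have "a * (- poly P a * inverse c) = 1" .
    hence "inverse a = - poly P a * inverse c" by (rule inverse_unique)
    moreover have "- poly P a * inverse c \<in> S"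
      using S_poly[OF KP pCons.prems(5)] cK by (intro S_mult[OF S_uminus S_K]) auto
    ultimately show ?thesis by simp
  qed
qed

lemma S_inv: assumes a: "a \<in> S" shows "inverse a \<in> S"
proof (cases "a = 0")
  case True then show ?thesis using S_0 by simp
next
  case False
  obtain P where P: "\<forall>i. coeff P i \<in> K" "separable_poly P" "poly P a = 0"
    using sc unfolding separable_closure_def by blast
  have "Kp P" using P(1) by (simp add: Kp_def)
  moreover have "P \<noteq> 0" using P(2) by (simp add: separable_poly_def)
  ultimately show ?thesis using inv_aux P(3) False a by blast
qed

lemma S_subfield: "is_subfield S"
  unfolding is_subfield_def by (auto intro: S_0 S_1 S_add S_mult S_uminus S_inv)

lemma S_sub: assumes F: "is_subfield F" "K \<subseteq> F" "T \<in> F" shows "S \<subseteq> F"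
proof
  fix y assume "y \<in> S"
  then obtain P where P: "Kp P" "y = poly P T" unfolding S_def by auto
  have "Kp P \<Longrightarrow> poly P T \<in> F"
  proof (induction P rule: pCons_induct)
    case 0 then show ?case using F(1) unfolding is_subfield_def by simp
  next
    case (pCons c P)
    hence "c \<in> F" "poly P T \<in> F" using F(2) by auto
    then show ?case using F(1,3) unfolding is_subfield_def by simp
  qed
  thus "y \<in> F" using P by simp
qed

definition M where "M = gen_field K T"

lemma M_S: "M = S"
proof
  show "M \<subseteq> S" unfolding M_def gen_field_def using S_subfield S_K S_T by blast
  show "S \<subseteq> M" unfolding M_def gen_field_def using S_sub by blast
qed

lemma M_E: "y \<in> M \<longleftrightarrow> (\<exists>c. Kf c \<and> y = E T c)"
proof
  assume "y \<in> M"
  then obtain P where P: "Kp P" "y = poly P T" unfolding M_S S_def by auto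
  obtain c where "Kf c" "\<forall>x\<in>Z. poly P x = E x c" using reduce[OF P(1)] by blast
  thus "\<exists>c. Kf c \<and> y = E T c" using P T_Z by blast
next
  assume "\<exists>c. Kf c \<and> y = E T c"
  thus "y \<in> M" using S_E M_S by auto
qed

end


lemma sep_factor:
  fixes P Q :: "'a::field poly"
  assumes sep: "separable_poly P" and PQ: "P = [:-r, 1:] * Q"
  shows "separable_poly Q" and "poly Q r \<noteq> 0"
proof -
  define L where "L = [:-r, 1:]"
  have PQ': "P = L * Q" using PQ L_def by simp
  have dP: "pderiv P = L * pderiv Q + Q * pderiv L" unfolding PQ' by (rule pderiv_mult)
  have P0: "P \<noteq> 0" using sep separable_poly_def by auto
  show "separable_poly Q"
    unfolding separable_poly_def
  proof (intro conjI allI impI)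
    show "Q \<noteq> 0" using P0 PQ' by auto
    fix D assume D: "D dvd Q \<and> D dvd pderiv Q"
    have "D dvd P" using D PQ' by simp
    moreover have "D dvd pderiv P" using D unfolding dP by simp
    ultimately show "degree D = 0" using sep unfolding separable_poly_def by blast
  qed
  show "poly Q r \<noteq> 0"
  proof
    assume "poly Q r = 0"
    hence LQ: "L dvd Q" unfolding L_def by (simp add: poly_eq_0_iff_dvd)
    have "L dvd P" using PQ' by simp
    moreover have "L dvd pderiv P" using LQ unfolding dP by simp
    ultimately have "degree L = 0" using sep unfolding separable_poly_def by blast
    thus False unfolding L_def by simp
  qed
qed

lemma sep_roots:
  fixes K :: "'a::field set" and P :: "'a poly"
  assumes sc: "separable_closure K"
  shows "separable_poly P \<Longrightarrow> card {x. poly P x = 0} = degree P"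
proof (induction "degree P" arbitrary: P)
  case 0
  have P0: "P \<noteq> 0" using 0 separable_poly_def by auto
  obtain a where a: "P = [:a:]" using 0 by (metis degree_eq_zeroE)
  have "a \<noteq> 0" using P0 a by simp
  hence "{x. poly P x = 0} = {}" using a by simp
  thus ?case using 0 by simp
next
  case (Suc n)
  have "1 \<le> degree P" using Suc by simp
  have "\<forall>P::'a poly. 1 \<le> degree P \<and> separable_poly P \<longrightarrow> (\<exists>x. poly P x = 0)"
    using sc unfolding separable_closure_def by blast
  then obtain r where r: "poly P r = 0" using Suc.prems \<open>1 \<le> degree P\<close> by blast
  then obtain Q where PQ: "P = [:-r, 1:] * Q" by (auto simp: poly_eq_0_iff_dvd elim!: dvdE)
  have sQ: "separable_poly Q" and Qr: "poly Q r \<noteq> 0" using sep_factor[OF Suc.prems PQ] by auto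
  have Q0: "Q \<noteq> 0" using sQ separable_poly_def by auto
  have "degree P = degree [:-r, 1:] + degree Q" unfolding PQ using Q0 by (intro degree_mult_eq) auto
  hence dQ: "degree Q = n" using Suc.hyps(2) by simp
  have roots: "{x. poly P x = 0} = insert r {x. poly Q x = 0}" using PQ by auto
  have fin: "finite {x. poly Q x = 0}" using Q0 by (rule poly_roots_finite)
  have "card {x. poly P x = 0} = Suc (card {x. poly Q x = 0})"
    unfolding roots using fin Qr by simp
  also have "card {x. poly Q x = 0} = n" using Suc.hyps(1)[OF dQ[symmetric] sQ] dQ by simp
  finally show ?case using Suc.hyps(2) by simp
qed

context KR begin

definition f :: "'a poly" where "f = monom 1 q + monom 1 (q - 1) - [:t ^ R:]"

lemma poly_f: "poly f x = x ^ q + x ^ (q - 1) - t ^ R"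
  unfolding f_def by (simp add: poly_monom)

lemma Z_f: "Z = {x. poly f x = 0}" unfolding Z_def poly_f by simp

lemma coeff_f: "coeff f i = (if i = q then 1 else 0) + (if i = q - 1 then 1 else 0) - (if i = 0 then t ^ R else 0)"
  unfolding f_def monom_0[symmetric] coeff_diff coeff_add coeff_monom by simp

lemma degree_f: "degree f = q"
proof (rule antisym)
  have "\<forall>i>q. coeff f i = 0" unfolding coeff_f by auto
  thus "degree f \<le> q" by (rule degree_le)
  have "coeff f q = 1" unfolding coeff_f using q2 by auto
  thus "q \<le> degree f" by (intro le_degree) simp
qed

lemma pderiv_f: "pderiv f = monom (-1) (q - 2)"
proof -
  have "of_nat (q - 1) = (of_nat q - 1 :: 'a)" using q2 by (simp add: of_nat_diff)
  hence q1: "of_nat (q - 1) = (-1 :: 'a)" using q_zero by simp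
  have "pderiv f = monom (of_nat q) (q - 1) + monom (of_nat (q - 1)) (q - 1 - 1)"
    unfolding f_def by (simp add: pderiv_add pderiv_diff pderiv_monom pderiv_singleton)
  also have "\<dots> = monom (-1) (q - 2)" using q_zero q1 by (simp add: diff_diff_left numeral_2_eq_2)
  finally show ?thesis .
qed

lemma sep_f: "separable_poly f"
  unfolding separable_poly_def
proof (intro conjI allI impI)
  show "f \<noteq> 0" using degree_f q2 by auto
  fix D assume D: "D dvd f \<and> D dvd pderiv f"
  have "monom 1 q + monom 1 (q - 1) = pderiv f * (- (monom 1 2 + monom 1 1))"
  proof -
    have e1: "q - 2 + 2 = q" and e2: "q - 2 + 1 = q - 1" using q2 by auto
    have m1: "monom (-1::'a) (q-2) * monom 1 2 = monom (-1) q" by (simp only: mult_monom e1) simp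
    have m2: "monom (-1::'a) (q-2) * monom 1 1 = monom (-1) (q - 1)" by (simp only: mult_monom e2) simp
    have n: "- monom (-1::'a) n = monom 1 n" for n by (simp add: poly_eq_iff coeff_monom)
    have "pderiv f * (- (monom 1 2 + monom 1 1)) = - (monom (-1::'a) (q-2) * monom 1 2) - monom (-1::'a) (q-2) * monom 1 1"
      unfolding pderiv_f by (simp add: right_diff_distrib)
    also have "\<dots> = monom 1 q + monom 1 (q - 1)" unfolding m1 m2 n by (simp add: n[symmetric])
    finally show ?thesis by simp
  qed
  hence "D dvd monom 1 q + monom 1 (q - 1)" using D by (metis dvd_mult2)
  hence "D dvd (monom 1 q + monom 1 (q - 1)) - f" using D by (simp add: dvd_diff)
  moreover have "(monom 1 q + monom 1 (q - 1)) - f = [:t ^ R:]" unfolding f_def by simp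
  ultimately have "D dvd [:t ^ R:]" by simp
  moreover have "[:t ^ R:] \<noteq> 0" using t_nz by simp
  ultimately have "degree D \<le> degree [:t ^ R:]" by (rule dvd_imp_degree_le)
  thus "degree D = 0" by simp
qed

lemma card_Z: "card Z = q" and fin_Z: "finite Z"
proof -
  show "card Z = q" unfolding Z_f using sep_roots[OF sc sep_f] degree_f by simp
  show "finite Z" unfolding Z_f using sep_f separable_poly_def poly_roots_finite by blast
qed

end


context KR begin

definition rep where "rep x = (SOME P. Kp P \<and> x = poly P T)"
definition sig where "sig r x = (if x \<in> M then poly (rep x) r else undefined)"

lemma wd: assumes "Kp P" "Kp Q" "poly P T = poly Q T" "r \<in> Z" shows "poly P r = poly Q r"
proof -
  obtain c where c: "Kf c" "\<forall>x\<in>Z. poly P x = E x c" using reduce[OF assms(1)] by blast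
  obtain d where d: "Kf d" "\<forall>x\<in>Z. poly Q x = E x d" using reduce[OF assms(2)] by blast
  have "E T c = E T d" using c d assms(3) T_Z by simp
  hence "\<forall>i<q. c i = d i" using E_unique c(1) d(1) by blast
  hence "E r c = E r d" by (rule E_cong)
  thus ?thesis using c d assms(4) by simp
qed

lemma polyT_M: "Kp P \<Longrightarrow> poly P T \<in> M" unfolding M_S S_def by auto

lemma rep: assumes "x \<in> M" shows "Kp (rep x)" "x = poly (rep x) T"
proof -
  have "\<exists>P. Kp P \<and> x = poly P T" using assms unfolding M_S S_def by auto
  hence "Kp (rep x) \<and> x = poly (rep x) T" unfolding rep_def by (rule someI_ex)
  thus "Kp (rep x)" "x = poly (rep x) T" by auto
qed

lemma sig_poly: assumes "Kp P" "r \<in> Z" shows "sig r (poly P T) = poly P r"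
proof -
  have m: "poly P T \<in> M" using polyT_M[OF assms(1)] .
  have "sig r (poly P T) = poly (rep (poly P T)) r" using m unfolding sig_def by simp
  also have "\<dots> = poly P r" using wd[OF rep(1)[OF m] assms(1) rep(2)[OF m, symmetric] assms(2)] .
  finally show ?thesis .
qed

lemma K_M: "c \<in> K \<Longrightarrow> c \<in> M" using M_S S_K by auto
lemma T_M: "T \<in> M" using M_S S_T by auto

lemma sig_K: "c \<in> K \<Longrightarrow> r \<in> Z \<Longrightarrow> sig r c = c"
  using sig_poly[of "[:c:]" r] by simp

lemma sig_T: "r \<in> Z \<Longrightarrow> sig r T = r"
  using sig_poly[of "[:0, 1:]" r] by simp

lemma sig_emb: assumes r: "r \<in> Z" shows "sig r \<in> embeddings K M"
  unfolding embeddings_def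
proof (intro CollectI conjI ballI allI impI)
  fix a b assume a: "a \<in> M" and b: "b \<in> M"
  obtain P where P: "Kp P" "a = poly P T" using rep[OF a] by blast
  obtain Q where Q: "Kp Q" "b = poly Q T" using rep[OF b] by blast
  have "sig r (a + b) = sig r (poly (P + Q) T)" using P Q by simp
  also have "\<dots> = poly P r + poly Q r" using sig_poly[of "P + Q" r] P Q r by simp
  finally show "sig r (a + b) = sig r a + sig r b" using sig_poly P Q r by simp
  have "sig r (a * b) = sig r (poly (P * Q) T)" using P Q by simp
  also have "\<dots> = poly P r * poly Q r" using sig_poly[of "P * Q" r] P Q r by simp
  finally show "sig r (a * b) = sig r a * sig r b" using sig_poly P Q r by simp
next
  fix a assume "a \<in> K" thus "sig r a = a" using sig_K r by simp
next
  fix x assume "x \<notin> M" thus "sig r x = undefined" unfolding sig_def by simp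
qed

lemma emb_poly: assumes s: "s \<in> embeddings K M" shows "Kp P \<Longrightarrow> s (poly P T) = poly P (s T)"
proof (induction P rule: pCons_induct)
  case 0
  have "s 0 = 0" using s K0 unfolding embeddings_def by blast
  then show ?case by simp
next
  case (pCons c P)
  have cK: "c \<in> K" and KP: "Kp P" using pCons.prems by auto
  have PM: "poly P T \<in> M" using polyT_M[OF KP] .
  have hom: "\<forall>a\<in>M. \<forall>b\<in>M. s (a + b) = s a + s b \<and> s (a * b) = s a * s b" and fixK: "\<forall>a\<in>K. s a = a"
    using s unfolding embeddings_def by auto
  have "s (poly (pCons c P) T) = s (c + T * poly P T)" by simp
  also have "\<dots> = s c + s T * s (poly P T)"
    using hom K_M[OF cK] T_M PM S_mult[of T "poly P T"] M_S by auto
  also have "\<dots> = c + s T * poly P (s T)" using fixK cK pCons.IH KP by simp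
  finally show ?case by simp
qed

lemma emb_root: assumes s: "s \<in> embeddings K M" shows "s T \<in> Z"
proof -
  define G where "G = monom (1::'a) q + monom 1 (q - 1)"
  have KG: "Kp G" unfolding G_def by simp
  have "poly G T = t ^ R" using Teq unfolding G_def by (simp add: poly_monom)
  hence "s (poly G T) = s (t ^ R)" by simp
  also have "\<dots> = t ^ R" using s tK unfolding embeddings_def by simp
  finally have "poly G (s T) = t ^ R" using emb_poly[OF s KG] by simp
  thus ?thesis unfolding Z_def G_def by (simp add: poly_monom)
qed

lemma emb_eq: assumes s: "s \<in> embeddings K M" shows "s = sig (s T)"
proof
  fix x show "s x = sig (s T) x"
  proof (cases "x \<in> M")
    case True
    obtain P where P: "Kp P" "x = poly P T" using rep[OF True] by blast
    show ?thesis using P emb_poly[OF s P(1)] sig_poly[OF P(1) emb_root[OF s]] by simp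
  next
    case False
    then show ?thesis using s unfolding embeddings_def sig_def by simp
  qed
qed

lemma emb_image: "embeddings K M = sig ` Z"
proof
  show "embeddings K M \<subseteq> sig ` Z" using emb_eq emb_root by blast
  show "sig ` Z \<subseteq> embeddings K M" using sig_emb by blast
qed

lemma sig_inj: "inj_on sig Z"
proof (rule inj_onI)
  fix r r' assume "r \<in> Z" "r' \<in> Z" "sig r = sig r'"
  thus "r = r'" using sig_T by metis
qed

lemma card_emb: "card (embeddings K M) = q" and fin_emb: "finite (embeddings K M)"
  using card_image[OF sig_inj] card_Z fin_Z emb_image by auto

lemma sig_id: "x \<in> M \<Longrightarrow> sig T x = x"
  using rep[of x] sig_poly[OF _ T_Z] by metis

end


context KR begin

lemma v_nat_unit: assumes "\<not> p dvd n" shows "v (of_nat n) = 0"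
proof -
  have cp: "coprime n p" using prime_imp_coprime[OF prime assms] by (simp add: coprime_commute)
  have n0: "n \<noteq> 0" using assms by (metis dvd_0_right)
  obtain x y where xy: "n * x = p * y + gcd n p" using bezout_nat[OF n0] by blast
  hence "n * x = p * y + 1" using cp by simp
  hence "(of_nat n * of_nat x :: 'a) = of_nat p * of_nat y + 1" by (metis of_nat_1 of_nat_add of_nat_mult)
  hence "(of_nat n * of_nat x :: 'a) = 1" using charp by simp
  hence nz: "(of_nat n :: 'a) \<noteq> 0" "(of_nat x :: 'a) \<noteq> 0" by auto
  obtain a b where ab: "v (of_nat n) = ereal a" "v (of_nat x) = ereal b"
    using v_fin[OF val nz(1)] v_fin[OF val nz(2)] by blast
  have "v (of_nat n) + v (of_nat x) = 0" using v_mult[OF val, of "of_nat n" "of_nat x"] \<open>_ = 1\<close> by simp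
  moreover have "0 \<le> v (of_nat n)" "0 \<le> v (of_nat x)" using v_of_nat_ge[OF val] by auto
  ultimately have "a + b = 0" "0 \<le> a" "0 \<le> b" using ab by auto
  hence "a = 0" by simp
  thus ?thesis using ab by (simp add: zero_ereal_def)
qed

definition Pc :: "(nat \<Rightarrow> 'a) \<Rightarrow> 'a poly" where "Pc c = (\<Sum>i<q. monom (c i) i)"

lemma poly_Pc: "poly (Pc c) x = E x c"
  unfolding Pc_def E_def by (simp add: poly_sum poly_monom)

lemma Kp_Pc: "Kf c \<Longrightarrow> Kp (Pc c)"
  unfolding Pc_def Kp_def Kf_def by (simp add: coeff_sum coeff_monom)

lemma sig_E: "Kf c \<Longrightarrow> r \<in> Z \<Longrightarrow> sig r (E T c) = E r c"
  using sig_poly[OF Kp_Pc] poly_Pc by metis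

text \<open>The uniformizer\<close>

lemma alpha_ex: "\<exists>\<alpha> \<beta>. 1 \<le> \<alpha> \<and> \<alpha> < q \<and> \<alpha> * R + 1 = q * \<beta>"
proof -
  have R0: "R \<noteq> 0" using Rpos by simp
  obtain x y where xy: "R * x = q * y + gcd R q" using bezout_nat[OF R0] by blast
  have "gcd R q = 1" using cop by (simp add: coprime_iff_gcd_eq_1 gcd.commute)
  hence xy1: "R * x = q * y + 1" using xy by simp
  define \<alpha> where "\<alpha> = ((q - 1) * x) mod q"
  have "(\<alpha> * R + 1) mod q = ((q - 1) * x * R + 1) mod q"
    unfolding \<alpha>_def by (metis mod_add_left_eq mod_mult_left_eq)
  also have "(q - 1) * x * R + 1 = (q - 1) * (R * x) + 1" by (simp add: mult_ac)
  also have "\<dots> = (q - 1) * (q * y + 1) + 1" unfolding xy1 ..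
  also have "\<dots> = q * ((q - 1) * y + 1)"
  proof -
    obtain m where m: "q = Suc m" using q2 by (cases q) auto
    show ?thesis unfolding m by (simp add: algebra_simps)
  qed
  finally have "(\<alpha> * R + 1) mod q = 0" by simp
  then obtain \<beta> where b: "\<alpha> * R + 1 = q * \<beta>" by (auto elim!: dvdE simp: mod_eq_0_iff_dvd)
  have "\<alpha> < q" unfolding \<alpha>_def using q2 by simp
  moreover have "1 \<le> \<alpha>"
  proof (rule ccontr)
    assume "\<not> 1 \<le> \<alpha>" hence "\<alpha> = 0" by simp
    hence "q * \<beta> = 1" using b by simp
    thus False using q2 by (simp add: mult_eq_1_iff)
  qed
  ultimately show ?thesis using b by blast
qed

definition alpha where "alpha = (SOME \<alpha>. \<exists>\<beta>. 1 \<le> \<alpha> \<and> \<alpha> < q \<and> \<alpha> * R + 1 = q * \<beta>)"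
definition beta where "beta = (SOME \<beta>. 1 \<le> alpha \<and> alpha < q \<and> alpha * R + 1 = q * \<beta>)"

lemma alpha_beta: "1 \<le> alpha" "alpha < q" "alpha * R + 1 = q * beta"
proof -
  have "\<exists>\<beta>. 1 \<le> alpha \<and> alpha < q \<and> alpha * R + 1 = q * \<beta>"
    unfolding alpha_def using alpha_ex by (rule someI_ex)
  hence "1 \<le> alpha \<and> alpha < q \<and> alpha * R + 1 = q * beta" unfolding beta_def by (rule someI_ex)
  thus "1 \<le> alpha" "alpha < q" "alpha * R + 1 = q * beta" by auto
qed

lemma p_ndvd_alpha: "\<not> p dvd alpha"
proof
  assume "p dvd alpha"
  hence "p dvd alpha * R" by simp
  moreover have "p dvd alpha * R + 1" using alpha_beta(3) p_dvd_q by simp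
  ultimately have "p dvd 1" by (metis dvd_add_right_iff)
  thus False using prime by simp
qed

definition s0 where "s0 = inverse t ^ beta"
definition pi where "pi = T ^ alpha * s0"

lemma s0K: "s0 \<in> K" unfolding s0_def using tK by simp
lemma s0_nz: "s0 \<noteq> 0" unfolding s0_def using t_nz by simp
lemma v_s0: "v s0 = ereal (real beta)"
proof -
  have "v (inverse t) = 1" using v_inverse[OF val t_nz] vt by simp
  hence "real_of_ereal (v (inverse t)) = 1" by simp
  thus ?thesis unfolding s0_def using v_power[OF val, of "inverse t" beta] t_nz by simp
qed

lemma ab_real: "real beta + real alpha * wT = 1 / real q"
proof -
  have "real alpha * real R + 1 = real q * real beta" using alpha_beta(3) by (metis of_nat_1 of_nat_add of_nat_mult)
  thus ?thesis unfolding wT_def using q2 by (simp add: field_simps)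
qed

lemma pi_poly: "pi = poly (monom s0 alpha) T" unfolding pi_def by (simp add: poly_monom mult.commute)
lemma pi_M: "pi \<in> M" using pi_poly polyT_M s0K by simp
lemma pi_nz: "pi \<noteq> 0" unfolding pi_def using T_nz s0_nz by simp
lemma v_pi: "v pi = ereal (1 / real q)"
proof -
  have "v pi = ereal (real alpha * wT) + ereal (real beta)"
    unfolding pi_def using v_mult[OF val] v_pow_root[OF T_Z] v_s0 by simp
  thus ?thesis using ab_real by (simp add: algebra_simps)
qed

end


context KR begin

lemma lower_bound: assumes r: "r \<in> Z" and a: "a \<in> M" and va: "0 \<le> v a"
  shows "ereal (1 / real q + rho) \<le> v (sig r a - a)"
proof -
  obtain c where c: "Kf c" "a = E T c" using a M_E by blast
  have diff: "sig r a - a = (\<Sum>i<q. c i * (r ^ i - T ^ i))"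
    using sig_E[OF c(1) r] c(2) unfolding E_def by (simp add: sum_subtractf[symmetric] right_diff_distrib)
  show ?thesis
  proof (cases "\<exists>i<q. c i \<noteq> 0")
    case False
    hence "sig r a - a = 0" unfolding diff by simp
    thus ?thesis by simp
  next
    case True
    obtain j where j: "j < q" "c j \<noteq> 0" "v (E T c) = v (c j * T ^ j)"
      and le: "\<forall>i<q. v (c j * T ^ j) \<le> v (c i * T ^ i)" using min_formula[OF c(1) True] by blast
    have "ereal (1 / real q + rho) \<le> v (\<Sum>i<q. c i * (r ^ i - T ^ i))"
    proof (rule v_sum_ge[OF val], simp, intro ballI)
      fix i assume i: "i \<in> {..<q}"
      show "ereal (1 / real q + rho) \<le> v (c i * (r ^ i - T ^ i))"
      proof (cases "i = 0 \<or> c i = 0")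
        case True then show ?thesis by auto
      next
        case False
        hence i1: "1 \<le> i" and ci: "c i \<noteq> 0" by auto
        have ciK: "c i \<in> K" using c(1) Kf_def by auto
        have "0 \<le> v (c i * T ^ i)" using le i va c(2) j(3) by auto
        hence g: "ereal (1 / real q) \<le> v (c i * T ^ i)" using term_nonint[OF ciK ci i1] i by simp
        define z where "z = real_of_ereal (v (c i))"
        have vz: "v (c i) = ereal z" using v_fin[OF val ci] z_def by simp
        have "v (c i * T ^ i) = ereal (z + real i * wT)" using v_mult[OF val] vz v_pow_root[OF T_Z] by simp
        hence z1: "1 / real q \<le> z + real i * wT" using g by simp
        have "ereal (z + (real i * wT + rho)) \<le> v (c i * (r ^ i - T ^ i))"
          using vz diffpow_v[OF r i1] by (intro v_mult_ge) auto
        moreover have "ereal (1 / real q + rho) \<le> ereal (z + (real i * wT + rho))" using z1 by simp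
        ultimately show ?thesis by (rule order.trans[rotated])
      qed
    qed
    thus ?thesis unfolding diff .
  qed
qed

lemma attained: assumes r: "r \<in> Z" and rT: "r \<noteq> T"
  shows "v (sig r pi - pi) = ereal (1 / real q + rho)"
proof -
  define n where "n = alpha"
  have n1: "1 \<le> n" using alpha_beta n_def by simp
  have "sig r pi = poly (monom s0 alpha) r" using sig_poly[OF _ r] pi_poly s0K by simp
  hence "sig r pi - pi = s0 * (r ^ n - T ^ n)" unfolding pi_def n_def by (simp add: poly_monom algebra_simps)
  also have "r ^ n - T ^ n = (r - T) * (\<Sum>i<n. T ^ (n - Suc i) * r ^ i)" by (rule power_diff_sumr2)
  finally have eq: "sig r pi - pi = s0 * ((r - T) * (\<Sum>i<n. T ^ (n - Suc i) * r ^ i))" .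
  define A where "A = of_nat n * T ^ (n - 1)"
  define B where "B = (\<Sum>i<n. T ^ (n - Suc i) * (r ^ i - T ^ i))"
  have AB: "(\<Sum>i<n. T ^ (n - Suc i) * r ^ i) = A + B"
  proof -
    have "(\<Sum>i<n. T ^ (n - Suc i) * r ^ i) = (\<Sum>i<n. T ^ (n - 1) + T ^ (n - Suc i) * (r ^ i - T ^ i))"
    proof (intro sum.cong refl)
      fix i assume "i \<in> {..<n}"
      hence "n - Suc i + i = n - 1" by simp
      hence "T ^ (n - Suc i) * T ^ i = T ^ (n - 1)" by (metis power_add)
      thus "T ^ (n - Suc i) * r ^ i = T ^ (n - 1) + T ^ (n - Suc i) * (r ^ i - T ^ i)"
        by (simp add: right_diff_distrib)
    qed
    thus ?thesis unfolding A_def B_def by (simp add: sum.distrib)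
  qed
  have vA: "v A = ereal (real (n - 1) * wT)"
    unfolding A_def using v_mult[OF val] v_nat_unit[OF p_ndvd_alpha] v_pow_root[OF T_Z] n_def by simp
  have vB: "ereal (real (n - 1) * wT + rho) \<le> v B"
    unfolding B_def
  proof (rule v_sum_ge[OF val], simp, intro ballI)
    fix i assume i: "i \<in> {..<n}"
    show "ereal (real (n - 1) * wT + rho) \<le> v (T ^ (n - Suc i) * (r ^ i - T ^ i))"
    proof (cases "i = 0")
      case True then show ?thesis by simp
    next
      case False
      hence "ereal (real (n - Suc i) * wT + (real i * wT + rho)) \<le> v (T ^ (n - Suc i) * (r ^ i - T ^ i))"
        using v_pow_root[OF T_Z] diffpow_v[OF r] by (intro v_mult_ge) auto
      moreover have "real (n - Suc i) * wT + (real i * wT + rho) = real (n - 1) * wT + rho"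
        using i by (simp add: of_nat_diff algebra_simps)
      ultimately show ?thesis by simp
    qed
  qed
  have "ereal (real (n - 1) * wT) < ereal (real (n - 1) * wT + rho)" using rho_pos by simp
  hence "ereal (real (n - 1) * wT) < v B" using vB by (rule order_less_le_trans)
  hence "v A < v B" using vA by simp
  hence vAB: "v (A + B) = ereal (real (n - 1) * wT)" using v_strict[OF val] vA by simp
  have "v (sig r pi - pi) = ereal (real beta) + (ereal (wT + rho) + ereal (real (n - 1) * wT))"
    unfolding eq AB using v_mult[OF val] v_s0 delta_v[OF r rT] vAB by simp
  also have "\<dots> = ereal (real beta + real n * wT + rho)" using n1 by (simp add: of_nat_diff algebra_simps)
  also have "\<dots> = ereal (1 / real q + rho)" using ab_real n_def by simp
  finally show ?thesis .
qed

end


context KR begin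

lemma M_pow: "x \<in> M \<Longrightarrow> x ^ n \<in> M" using S_pow M_S by auto
lemma M_inv: "x \<in> M \<Longrightarrow> inverse x \<in> M" using S_inv M_S by auto

lemma VS: "v ` (M - {0}) = range (\<lambda>k::int. ereal (of_int k / of_nat q))"
proof
  show "v ` (M - {0}) \<subseteq> range (\<lambda>k::int. ereal (of_int k / of_nat q))"
  proof
    fix e assume "e \<in> v ` (M - {0})"
    then obtain y where y: "y \<in> M" "y \<noteq> 0" "e = v y" by auto
    obtain c where c: "Kf c" "y = E T c" using y(1) M_E by blast
    have "\<exists>i<q. c i \<noteq> 0"
    proof (rule ccontr)
      assume "\<not> (\<exists>i<q. c i \<noteq> 0)"
      hence "E T c = 0" unfolding E_def by simp
      thus False using y c by simp
    qed
    then obtain j where j: "j < q" "c j \<noteq> 0" "v (E T c) = v (c j * T ^ j)"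
      using min_formula[OF c(1)] by blast
    have cjK: "c j \<in> K" using c(1) Kf_def by auto
    obtain z :: int where z: "v (c j * T ^ j) = ereal (of_int z + real j * wT)" using term_v[OF cjK j(2)] by blast
    have "of_int z + real j * wT = of_int (z * int q - int j * int R) / real q"
      unfolding wT_def using q2 by (simp add: field_simps)
    hence "e = ereal (of_int (z * int q - int j * int R) / of_nat q)" using y(3) c(2) j(3) z by simp
    thus "e \<in> range (\<lambda>k::int. ereal (of_int k / of_nat q))" by blast
  qed
  show "range (\<lambda>k::int. ereal (of_int k / of_nat q)) \<subseteq> v ` (M - {0})"
  proof
    fix e assume "e \<in> range (\<lambda>k::int. ereal (of_int k / of_nat q))"
    then obtain k :: int where k: "e = ereal (of_int k / of_nat q)" by auto
    have wpi: "real_of_ereal (v pi) = 1 / real q" using v_pi by simp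
    show "e \<in> v ` (M - {0})"
    proof (cases "0 \<le> k")
      case True
      have "v (pi ^ nat k) = ereal (real (nat k) * (1 / real q))" using v_power[OF val pi_nz] wpi by simp
      also have "\<dots> = e" using True k by simp
      finally have "v (pi ^ nat k) = e" .
      moreover have "pi ^ nat k \<in> M - {0}" using M_pow[OF pi_M] pi_nz by simp
      ultimately show ?thesis by blast
    next
      case False
      have ip: "inverse pi \<noteq> 0" using pi_nz by simp
      have "v (inverse pi) = - ereal (1 / real q)" using v_inverse[OF val pi_nz] v_pi by simp
      hence wip: "real_of_ereal (v (inverse pi)) = - (1 / real q)" by simp
      have "v (inverse pi ^ nat (- k)) = ereal (real (nat (- k)) * (- (1 / real q)))"
        using v_power[OF val ip] wip by simp
      also have "\<dots> = e" using False k by simp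
      finally have "v (inverse pi ^ nat (- k)) = e" .
      moreover have "inverse pi ^ nat (- k) \<in> M - {0}" using M_pow[OF M_inv[OF pi_M]] ip by simp
      ultimately show ?thesis by blast
    qed
  qed
qed

lemma ram: "ram_index v M = q"
  unfolding ram_index_def
proof (rule the_equality)
  show "0 < q \<and> v ` (M - {0}) = range (\<lambda>k::int. ereal (of_int k / of_nat q))" using VS q2 by simp
  fix e assume e: "0 < e \<and> v ` (M - {0}) = range (\<lambda>k::int. ereal (of_int k / of_nat e))"
  hence eq: "range (\<lambda>k::int. ereal (of_int k / of_nat e)) = range (\<lambda>k::int. ereal (of_int k / of_nat q))"
    using VS by simp
  have "ereal (of_int 1 / of_nat e) \<in> range (\<lambda>k::int. ereal (of_int k / of_nat q))" unfolding eq[symmetric] by blast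
  then obtain k1 :: int where k1: "1 / real e = of_int k1 / real q" by auto
  have "ereal (of_int 1 / of_nat q) \<in> range (\<lambda>k::int. ereal (of_int k / of_nat e))" unfolding eq by blast
  then obtain k2 :: int where k2: "1 / real q = of_int k2 / real e" by auto
  have "real q = of_int k1 * real e" using k1 e q2 by (simp add: field_simps)
  hence i1: "int q = k1 * int e" by (metis of_int_eq_iff of_int_mult of_int_of_nat_eq)
  have "real e = of_int k2 * real q" using k2 e q2 by (simp add: field_simps)
  hence i2: "int e = k2 * int q" by (metis of_int_eq_iff of_int_mult of_int_of_nat_eq)
  have "int q * 1 = int q * (k1 * k2)" using i1 i2 by (simp add: algebra_simps)
  hence "k1 * k2 = 1" using q2 by (simp only: mult_left_cancel)
  hence "k1 = 1 \<or> k1 = -1" by (auto simp: zmult_eq_1_iff)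
  moreover have "k1 > 0"
  proof -
    have "0 < k1 * int e" using i1 q2 by simp
    thus ?thesis using e by (auto simp: zero_less_mult_iff)
  qed
  ultimately have "k1 = 1" by auto
  thus "e = q" using i1 by simp
qed

definition i0 :: real where "i0 = 1 + real R / (real q - 1)"

lemma li_T: "lower_index v M (sig T) = \<infinity>"
proof -
  have "\<infinity> \<le> (INF a \<in> {a \<in> M. 0 \<le> v a}. v (sig T a - a))"
    using sig_id by (intro INF_greatest) simp
  hence "(INF a \<in> {a \<in> M. 0 \<le> v a}. v (sig T a - a)) = \<infinity>" by simp
  thus ?thesis unfolding lower_index_def ram using q2 by simp
qed

lemma li_r: assumes r: "r \<in> Z" and rT: "r \<noteq> T" shows "lower_index v M (sig r) = ereal i0"
proof -
  have "(INF a \<in> {a \<in> M. 0 \<le> v a}. v (sig r a - a)) = ereal (1 / real q + rho)"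
  proof (rule antisym)
    have "pi \<in> {a \<in> M. 0 \<le> v a}" using pi_M v_pi by simp
    hence "(INF a \<in> {a \<in> M. 0 \<le> v a}. v (sig r a - a)) \<le> v (sig r pi - pi)" by (rule INF_lower)
    thus "(INF a \<in> {a \<in> M. 0 \<le> v a}. v (sig r a - a)) \<le> ereal (1 / real q + rho)"
      using attained[OF r rT] by simp
    show "ereal (1 / real q + rho) \<le> (INF a \<in> {a \<in> M. 0 \<le> v a}. v (sig r a - a))"
      using lower_bound[OF r] by (auto intro: INF_greatest)
  qed
  moreover have "real q * (1 / real q + rho) = i0" unfolding i0_def rho_def using q2 by (simp add: field_simps)
  ultimately show ?thesis unfolding lower_index_def ram by simp
qed

lemma phi_formula: "herbrand_phi v K M u = ((u + 1) + real (q - 1) * min i0 (u + 1)) / real q - 1"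
proof -
  define g where "g \<sigma> = real_of_ereal (min (lower_index v M \<sigma>) (ereal (u + 1)))" for \<sigma>
  have "(\<Sum>\<sigma>\<in>embeddings K M. g \<sigma>) = (\<Sum>r\<in>Z. g (sig r))"
    unfolding emb_image by (rule sum.reindex[OF sig_inj, unfolded comp_def])
  also have "\<dots> = g (sig T) + (\<Sum>r\<in>Z - {T}. g (sig r))" using fin_Z T_Z by (simp add: sum.remove)
  also have "g (sig T) = u + 1" unfolding g_def li_T by simp
  also have "(\<Sum>r\<in>Z - {T}. g (sig r)) = (\<Sum>r\<in>Z - {T}. min i0 (u + 1))"
  proof (intro sum.cong refl)
    fix r assume "r \<in> Z - {T}"
    thus "g (sig r) = min i0 (u + 1)" unfolding g_def using li_r by (simp add: min_def)
  qed
  also have "\<dots> = real (q - 1) * min i0 (u + 1)" using card_Z fin_Z T_Z by simp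
  finally show ?thesis unfolding herbrand_phi_def ram g_def by simp
qed

end


context KR begin

definition bk :: real where "bk = real R / (real q - 1)"
definition Pf :: "real \<Rightarrow> real" where "Pf x = (if x \<le> bk then x else real q * (x - bk) + bk)"

lemma bk_pos: "0 < bk" unfolding bk_def using q2 Rpos by simp
lemma i0_bk: "i0 = 1 + bk" unfolding i0_def bk_def by simp

lemma phi_low: "u \<le> bk \<Longrightarrow> herbrand_phi v K M u = u"
proof -
  assume u: "u \<le> bk"
  have "min i0 (u + 1) = u + 1" using u i0_bk by simp
  hence "herbrand_phi v K M u = ((u + 1) + real (q - 1) * (u + 1)) / real q - 1" using phi_formula by simp
  also have "\<dots> = u" using q2 by (simp add: of_nat_diff field_simps)
  finally show ?thesis .
qed

lemma phi_high: "bk < u \<Longrightarrow> herbrand_phi v K M u = ((u + 1) + real (q - 1) * (1 + bk)) / real q - 1"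
proof -
  assume u: "bk < u"
  have "min i0 (u + 1) = 1 + bk" using u i0_bk by simp
  thus ?thesis using phi_formula by simp
qed

lemma psi_eq: assumes x: "-1 \<le> x" shows "herbrand_psi v K M x = Pf x"
  unfolding herbrand_psi_def
proof (rule the_equality)
  show "-1 \<le> Pf x \<and> herbrand_phi v K M (Pf x) = x"
  proof (cases "x \<le> bk")
    case True then show ?thesis using x phi_low by (simp add: Pf_def)
  next
    case False
    hence xb: "bk < x" by simp
    have gt: "bk < real q * (x - bk) + bk" using xb q2 by simp
    have "herbrand_phi v K M (real q * (x - bk) + bk) = x"
      using phi_high[OF gt] q2 by (simp add: of_nat_diff field_simps)
    moreover have "-1 \<le> real q * (x - bk) + bk" using gt bk_pos by simp
    ultimately show ?thesis using False by (simp add: Pf_def)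
  qed
  fix u assume u: "-1 \<le> u \<and> herbrand_phi v K M u = x"
  show "u = Pf x"
  proof (cases "u \<le> bk")
    case True
    hence "x = u" using u phi_low by simp
    thus ?thesis using True by (simp add: Pf_def)
  next
    case False
    hence ub: "bk < u" by simp
    have xe: "x = ((u + 1) + real (q - 1) * (1 + bk)) / real q - 1" using u phi_high[OF ub] by simp
    have xu: "real q * (x - bk) + bk = u" unfolding xe using q2 by (simp add: of_nat_diff field_simps)
    have "bk < x"
    proof (rule ccontr)
      assume "\<not> bk < x"
      hence "real q * (x - bk) + bk \<le> bk" using q2 by (simp add: mult_nonneg_nonpos)
      thus False using xu ub by simp
    qed
    thus ?thesis using xu by (simp add: Pf_def)
  qed
qed

lemma diff_transfer: assumes x: "-1 < x" and d: "Pf differentiable (at x)"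
  shows "herbrand_psi v K M differentiable (at x)"
proof -
  obtain D where D: "(Pf has_real_derivative D) (at x)" using d real_differentiable_def by blast
  have "(herbrand_psi v K M has_real_derivative D) (at x)"
    using D by (rule has_field_derivative_transform_within_open[of _ _ _ "{-1<..}"]) (use x psi_eq in auto)
  thus ?thesis using real_differentiable_def by blast
qed

lemma diff_transfer2: assumes x: "-1 < x" and d: "herbrand_psi v K M differentiable (at x)"
  shows "Pf differentiable (at x)"
proof -
  obtain D where D: "(herbrand_psi v K M has_real_derivative D) (at x)" using d real_differentiable_def by blast
  have "(Pf has_real_derivative D) (at x)"
    using D by (rule has_field_derivative_transform_within_open[of _ _ _ "{-1<..}"]) (use x psi_eq in auto)
  thus ?thesis using real_differentiable_def by blast
qed

lemma Pf_diff: assumes "x \<noteq> bk" shows "Pf differentiable (at x)"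
proof (cases "x < bk")
  case True
  have "((\<lambda>y. y) has_real_derivative 1) (at x)" by (rule DERIV_ident)
  hence "(Pf has_real_derivative 1) (at x)"
    by (rule has_field_derivative_transform_within_open[of _ _ _ "{..<bk}"]) (use True in \<open>auto simp: Pf_def\<close>)
  thus ?thesis using real_differentiable_def by blast
next
  case False
  hence xb: "bk < x" using assms by simp
  have "((\<lambda>y. y - bk) has_real_derivative (1 - 0)) (at x)" by (intro DERIV_diff DERIV_ident DERIV_const)
  hence "((\<lambda>y. real q * (y - bk)) has_real_derivative real q * (1 - 0)) (at x)" by (rule DERIV_cmult)
  hence "((\<lambda>y. real q * (y - bk) + bk) has_real_derivative (real q * (1 - 0) + 0)) (at x)"
    using DERIV_const by (rule DERIV_add)
  hence "(Pf has_real_derivative (real q * (1 - 0) + 0)) (at x)"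
    by (rule has_field_derivative_transform_within_open[of _ _ _ "{bk<..}"]) (use xb in \<open>auto simp: Pf_def\<close>)
  thus ?thesis using real_differentiable_def by blast
qed

lemma Pf_not_diff: "\<not> Pf differentiable (at bk)"
proof
  assume "Pf differentiable (at bk)"
  then obtain D where D: "(Pf has_real_derivative D) (at bk)" using real_differentiable_def by blast
  have h1: "((\<lambda>y. Pf y - y) has_real_derivative (D - 1)) (at bk)"
    using D DERIV_ident by (rule DERIV_diff)
  have h2: "\<forall>y. \<bar>bk - y\<bar> < 1 \<longrightarrow> Pf bk - bk \<le> Pf y - y"
  proof (intro allI impI)
    fix y show "Pf bk - bk \<le> Pf y - y"
    proof (cases "y \<le> bk")
      case True thus ?thesis by (simp add: Pf_def)
    next
      case False
      have "1 * (y - bk) \<le> real q * (y - bk)" using False q2 by (intro mult_right_mono) auto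
      hence "y - bk \<le> real q * (y - bk)" by (simp only: mult_1)
      moreover have "Pf y = real q * (y - bk) + bk" "Pf bk = bk" using False by (auto simp: Pf_def)
      ultimately show ?thesis by linarith
    qed
  qed
  have d1: "D - 1 = 0" using DERIV_local_min[OF h1 _ h2] by simp
  have h3: "((\<lambda>y. Pf y - real q * y) has_real_derivative (D - real q * 1)) (at bk)"
    using D DERIV_cmult[OF DERIV_ident, of "real q" bk] by (rule DERIV_diff)
  have h4: "\<forall>y. \<bar>bk - y\<bar> < 1 \<longrightarrow> Pf bk - real q * bk \<le> Pf y - real q * y"
  proof (intro allI impI)
    fix y
    show "Pf bk - real q * bk \<le> Pf y - real q * y"
    proof (cases "y \<le> bk")
      case True
      have "(real q - 1) * y \<le> (real q - 1) * bk" using True q2 by (intro mult_left_mono) auto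
      thus ?thesis using True by (simp add: Pf_def algebra_simps)
    next
      case False thus ?thesis by (simp add: Pf_def algebra_simps)
    qed
  qed
  have d2: "D - real q * 1 = 0" using DERIV_local_min[OF h3 _ h4] by simp
  from d1 d2 have "real q = 1" by simp
  thus False using q2 by simp
qed

lemma main: "upper_breaks v K M = {real R / (real q - 1)}"
proof -
  have "upper_breaks v K M = {bk}"
  proof
    show "upper_breaks v K M \<subseteq> {bk}"
    proof
      fix x assume "x \<in> upper_breaks v K M"
      hence x: "-1 < x" "\<not> herbrand_psi v K M differentiable (at x)" unfolding upper_breaks_def by auto
      show "x \<in> {bk}" using x diff_transfer Pf_diff by blast
    qed
    show "{bk} \<subseteq> upper_breaks v K M"
      using bk_pos diff_transfer2 Pf_not_diff unfolding upper_breaks_def by force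
  qed
  thus ?thesis unfolding bk_def .
qed

end

theorem lemma6:
  fixes v :: "'a::field \<Rightarrow> ereal" and K :: "'a set" and p q R :: nat and t T :: 'a
  assumes "prime p" and "of_nat p = (0::'a)"
    and "separable_closure K" and "is_valuation v"
    and "normalized_discrete_on v K" and "complete_on v K" and "residue_alg_closed v K"
    and "t \<in> K" and "v t = -1"
    and "\<exists>k\<ge>1. q = p ^ k" and "0 < R" and "\<not> p dvd R"
    and "T ^ q + T ^ (q - 1) = t ^ R"
  shows "upper_breaks v K (gen_field K T) = {real R / (real q - 1)}"
proof -
  interpret KR v K p q R t T
    by (rule KR.intro) (fact assms)+
  show ?thesis using main unfolding M_def .
qed

end
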